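(* Let $\mathscr{X}$ be a complex Banach space and let $\mathscr{M},\mathscr{N}$ be closed subspaces with $\mathscr{M}\cap\mathscr{N}=\{0\}$ and $\mathscr{M}+\mathscr{N}=\mathscr{X}$. Then $\mathscr{M}$ and $\mathscr{N}$ are isomorphic (as Banach spaces) if and only if there exists a closed subspace $\mathscr{K}\subseteq\mathscr{X}$, distinct from both $\mathscr{M}$ and $\mathscr{N}$, such that $\mathscr{M}\cap\mathscr{K}=\{0\}$, $\mathscr{M}+\mathscr{K}=\mathscr{X}$, $\mathscr{N}\cap\mathscr{K}=\{0\}$, and $\mathscr{N}+\mathscr{K}=\mathscr{X}$. In that case $\mathscr{K}$ is isomorphic to $\mathscr{M}$ and to $\mathscr{N}$. *)

theory Defs
  imports "HOL-Analysis.Analysis"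
begin

text \<open>A complex Banach space is modelled
as a real Banach space (type class banach) together with a complex structure J
(multiplication by the imaginary unit): complex scalar multiplication is
(a + b i) x = a x + b J x, and the norm must be complex-homogeneous.\<close>

definition scaleC :: "('a::real_vector \<Rightarrow> 'a) \<Rightarrow> complex \<Rightarrow> 'a \<Rightarrow> 'a" where
  "scaleC J c x = Re c *\<^sub>R x + Im c *\<^sub>R J x"

definition complex_banach_structure :: "('a::banach \<Rightarrow> 'a) \<Rightarrow> bool" where
  "complex_banach_structure J \<longleftrightarrow>
     linear J \<and> (\<forall>x. J (J x) = - x) \<and> (\<forall>c x. norm (scaleC J c x) = cmod c * norm x)"

definition csubspace :: "('a::real_vector \<Rightarrow> 'a) \<Rightarrow> 'a set \<Rightarrow> bool" where
  "csubspace J S \<longleftrightarrow> 0 \<in> S \<and> (\<forall>x\<in>S. \<forall>y\<in>S. x + y \<in> S) \<and> (\<forall>c. \<forall>x\<in>S. scaleC J c x \<in> S)"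

definition cisomorphic :: "('a::real_normed_vector \<Rightarrow> 'a) \<Rightarrow> 'a set \<Rightarrow> 'a set \<Rightarrow> bool" where
  "cisomorphic J M N \<longleftrightarrow> (\<exists>T. bij_betw T M N
     \<and> (\<forall>x\<in>M. \<forall>y\<in>M. T (x + y) = T x + T y)
     \<and> (\<forall>c. \<forall>x\<in>M. T (scaleC J c x) = scaleC J c (T x))
     \<and> (\<exists>C. \<forall>x\<in>M. norm (T x) \<le> C * norm x)
     \<and> (\<exists>D. \<forall>x\<in>M. norm x \<le> D * norm (T x)))"

definition complementary :: "'a::real_vector set \<Rightarrow> 'a set \<Rightarrow> bool" where
  "complementary M N \<longleftrightarrow> M \<inter> N = {0} \<and> {m + n | m n. m \<in> M \<and> n \<in> N} = UNIV"

end

theory Submission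
  imports Defs
begin

lemma compl_unique:
  fixes A B :: "'a::real_vector set"
  assumes sA: "subspace A" and sB: "subspace B" and comp: "complementary A B"
    and "a \<in> A" "a' \<in> A" "b \<in> B" "b' \<in> B" and eq: "a + b = a' + b'"
  shows "a = a' \<and> b = b'"
proof -
  have "a - a' = b' - b" using eq by (simp add: algebra_simps)
  moreover have "a - a' \<in> A" using sA assms by (simp add: subspace_diff)
  moreover have "b' - b \<in> B" using sB assms by (simp add: subspace_diff)
  ultimately have "a - a' \<in> A \<inter> B" by simp
  then have "a - a' = 0" using comp unfolding complementary_def by auto
  then show ?thesis using eq by simp
qed

lemma key:
  fixes A B :: "'a::banach set"
  assumes sA: "subspace A" and sB: "subspace B" and cA: "closed A" and cB: "closed B"
    and comp: "complementary A B"
  shows "\<exists>C. \<forall>a\<in>A. \<forall>b\<in>B. norm a \<le> C * norm (a + b)"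
proof -
  define W where "W k = {a + b | a b. a \<in> A \<and> b \<in> B \<and> norm a < real (Suc k) \<and> norm b < real (Suc k)}" for k
  define Appr where "Appr d x \<longleftrightarrow> (\<forall>e>0. \<exists>a\<in>A. \<exists>b\<in>B. norm a < d \<and> norm b < d \<and> norm (x - (a + b)) < e)" for d x
  have cover: "(\<Union>k. closure (W k)) = UNIV"
  proof -
    have "x \<in> (\<Union>k. closure (W k))" for x
    proof -
      obtain a b where ab: "a \<in> A" "b \<in> B" "x = a + b" using comp unfolding complementary_def by blast
      obtain n where n: "max (norm a) (norm b) < real n" using reals_Archimedean2 by blast
      have "norm a < real (Suc n)" "norm b < real (Suc n)" using n by auto
      then have "x \<in> W n" unfolding W_def using ab by blast
      then show ?thesis using closure_subset by blast
    qed
    then show ?thesis by blast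
  qed
  have "\<exists>k. interior (closure (W k)) \<noteq> {}"
  proof (rule ccontr)
    assume "\<not> ?thesis"
    then have "euclidean interior_of \<Union>(range (\<lambda>k. closure (W k))) = {}"
      by (intro Baire_category_alt) (auto simp: completely_metrizable_space_euclidean closed_closedin[symmetric])
    then show False using cover by simp
  qed
  then obtain k y \<epsilon> where "\<epsilon> > 0" and yb: "ball y \<epsilon> \<subseteq> closure (W k)"
    by (metis all_not_in_conv open_contains_ball open_interior interior_subset subset_trans)
  have clA: "Appr (real (Suc k)) z" if zc: "z \<in> closure (W k)" for z
    unfolding Appr_def
  proof (intro allI impI)
    fix e :: real assume "e > 0"
    then obtain w where "w \<in> W k" "dist w z < e" using zc closure_approachable by metis
    then show "\<exists>a\<in>A. \<exists>b\<in>B. norm a < real (Suc k) \<and> norm b < real (Suc k) \<and> norm (z - (a + b)) < e"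
      unfolding W_def by (force simp: dist_norm norm_minus_commute)
  qed
  have H: "Appr (2 * real (Suc k)) x" if nx: "norm x < \<epsilon>" for x
  proof -
    have "y + x \<in> ball y \<epsilon>" "y \<in> ball y \<epsilon>" using nx \<open>\<epsilon> > 0\<close> by (auto simp: dist_norm)
    then have A1: "Appr (real (Suc k)) (y + x)" and A2: "Appr (real (Suc k)) y" using yb clA by blast+
    show ?thesis unfolding Appr_def
    proof (intro allI impI)
      fix e :: real assume e: "e > 0"
      obtain a1 b1 where ab1: "a1 \<in> A" "b1 \<in> B" "norm a1 < real (Suc k)" "norm b1 < real (Suc k)"
          "norm (y + x - (a1 + b1)) < e/2" using A1 e unfolding Appr_def by (meson half_gt_zero)
      obtain a2 b2 where ab2: "a2 \<in> A" "b2 \<in> B" "norm a2 < real (Suc k)" "norm b2 < real (Suc k)"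
          "norm (y - (a2 + b2)) < e/2" using A2 e unfolding Appr_def by (meson half_gt_zero)
      have "a1 - a2 \<in> A" "b1 - b2 \<in> B" using ab1 ab2 sA sB by (auto simp: subspace_diff)
      moreover have "norm (a1 - a2) < 2 * real (Suc k)" using norm_triangle_ineq4[of a1 a2] ab1 ab2 by (smt (verit))
      moreover have "norm (b1 - b2) < 2 * real (Suc k)" using norm_triangle_ineq4[of b1 b2] ab1 ab2 by (smt (verit))
      moreover have "norm (x - ((a1 - a2) + (b1 - b2))) < e"
      proof -
        have "x - ((a1 - a2) + (b1 - b2)) = (y + x - (a1 + b1)) - (y - (a2 + b2))" by (simp add: algebra_simps)
        then have "norm (x - ((a1 - a2) + (b1 - b2))) = norm ((y + x - (a1 + b1)) - (y - (a2 + b2)))" by (rule arg_cong[where f=norm])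
        also have "\<dots> \<le> norm (y + x - (a1 + b1)) + norm (y - (a2 + b2))" by (rule norm_triangle_ineq4)
        finally show ?thesis using ab1(5) ab2(5) by linarith
      qed
      ultimately show "\<exists>a\<in>A. \<exists>b\<in>B. norm a < 2 * real (Suc k) \<and> norm b < 2 * real (Suc k) \<and> norm (x - (a + b)) < e"
        by blast
    qed
  qed
  define c where "c = \<epsilon> / (2 * real (Suc k))"
  have c0: "c > 0" using \<open>\<epsilon> > 0\<close> by (simp add: c_def)
  have Hs: "Appr d x" if d0: "d > 0" and nx: "norm x < c * d" for x d
  proof -
    define t where "t = d / (2 * real (Suc k))"
    have t0: "t > 0" using d0 by (simp add: t_def)
    have ct: "c * d = \<epsilon> * t" by (simp add: c_def t_def)
    define x' where "x' = (1/t) *\<^sub>R x"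
    have xx: "x = t *\<^sub>R x'" using t0 by (simp add: x'_def)
    have "norm x' < \<epsilon>" using nx t0 ct by (simp add: x'_def field_simps)
    then have Ax: "Appr (2 * real (Suc k)) x'" by (rule H)
    show ?thesis unfolding Appr_def
    proof (intro allI impI)
      fix e :: real assume e: "e > 0"
      obtain a b where ab: "a \<in> A" "b \<in> B" "norm a < 2 * real (Suc k)" "norm b < 2 * real (Suc k)"
          "norm (x' - (a + b)) < e / t" using Ax e t0 unfolding Appr_def by (meson divide_pos_pos)
      have "t *\<^sub>R a \<in> A" "t *\<^sub>R b \<in> B" using ab sA sB by (auto simp: subspace_scale)
      moreover have "norm (t *\<^sub>R a) < d"
      proof -
        have "norm (t *\<^sub>R a) = t * norm a" using t0 by simp
        also have "\<dots> < t * (2 * real (Suc k))" using ab t0 by (intro mult_strict_left_mono) auto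
        also have "\<dots> = d" by (simp add: t_def)
        finally show ?thesis .
      qed
      moreover have "norm (t *\<^sub>R b) < d"
      proof -
        have "norm (t *\<^sub>R b) = t * norm b" using t0 by simp
        also have "\<dots> < t * (2 * real (Suc k))" using ab t0 by (intro mult_strict_left_mono) auto
        also have "\<dots> = d" by (simp add: t_def)
        finally show ?thesis .
      qed
      moreover have "norm (x - (t *\<^sub>R a + t *\<^sub>R b)) < e"
      proof -
        have "x - (t *\<^sub>R a + t *\<^sub>R b) = t *\<^sub>R (x' - (a + b))" by (simp add: xx algebra_simps)
        then have "norm (x - (t *\<^sub>R a + t *\<^sub>R b)) = t * norm (x' - (a + b))" using t0 by simp
        also have "\<dots> < t * (e / t)" using ab t0 by (intro mult_strict_left_mono) auto
        also have "\<dots> = e" using t0 by simp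
        finally show ?thesis .
      qed
      ultimately show "\<exists>a\<in>A. \<exists>b\<in>B. norm a < d \<and> norm b < d \<and> norm (x - (a + b)) < e"
        by blast
    qed
  qed
  define P where "P j r p \<longleftrightarrow> (norm r < c / 2^j \<longrightarrow> (fst p \<in> A \<and> snd p \<in> B \<and> norm (fst p) < 1/2^j
      \<and> norm (snd p) < 1/2^j \<and> norm (r - (fst p + snd p)) < c / 2^(Suc j)))" for j r p
  have "\<exists>p. P j r p" for j r
  proof (cases "norm r < c / 2^j")
    case True
    have "Appr (1/2^j) r" using True c0 by (intro Hs) (auto simp: field_simps)
    moreover have "c / 2^(Suc j) > 0" using c0 by simp
    ultimately obtain a b where "a \<in> A" "b \<in> B" "norm a < 1/2^j" "norm b < 1/2^j" "norm (r - (a + b)) < c / 2^(Suc j)"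
      unfolding Appr_def by blast
    then show ?thesis unfolding P_def by (intro exI[of _ "(a, b)"]) auto
  qed (auto simp: P_def)
  then have "\<forall>jr. \<exists>p. P (fst jr) (snd jr) p" by simp
  then obtain g0 where g0: "\<forall>jr. P (fst jr) (snd jr) (g0 jr)" by (rule choice[THEN exE]) 
  define g where "g j r = g0 (j, r)" for j r
  have g: "P j r (g j r)" for j r using g0[rule_format, of "(j, r)"] by (simp add: g_def)
  have step2: "\<exists>a\<in>A. \<exists>b\<in>B. x = a + b \<and> norm a \<le> 2" if nx: "norm x < c" for x
  proof -
    define rs where "rs = rec_nat x (\<lambda>j r. r - (fst (g j r) + snd (g j r)))"
    have rs0: "rs 0 = x" and rsS: "rs (Suc j) = rs j - (fst (g j (rs j)) + snd (g j (rs j)))" for j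
      by (simp_all add: rs_def)
    have bnd: "norm (rs j) < c / 2^j" for j
    proof (induction j)
      case 0 then show ?case using nx rs0 by simp
    next
      case (Suc j) then show ?case using g[of j "rs j"] unfolding P_def by (simp add: rsS)
    qed
    define am where "am j = fst (g j (rs j))" for j
    define bm where "bm j = snd (g j (rs j))" for j
    have amA: "am j \<in> A" and bmB: "bm j \<in> B" and nam: "norm (am j) < 1/2^j" and nbm: "norm (bm j) < 1/2^j" for j
      using g[of j "rs j"] bnd[of j] unfolding P_def am_def bm_def by auto
    have tel: "x - (\<Sum>j<n. am j + bm j) = rs n" for n
      by (induction n) (simp_all add: rs0 rsS am_def bm_def algebra_simps)
    have geo: "summable (\<lambda>j. (1/2::real)^j)" by (rule summable_geometric) simp
    have sna: "summable (\<lambda>j. norm (am j))"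
      by (rule summable_comparison_test[OF _ geo]) (use nam in \<open>auto simp: power_one_over less_imp_le\<close>)
    have snb: "summable (\<lambda>j. norm (bm j))"
      by (rule summable_comparison_test[OF _ geo]) (use nbm in \<open>auto simp: power_one_over less_imp_le\<close>)
    have sa: "summable am" using sna by (rule summable_norm_cancel)
    have sb: "summable bm" using snb by (rule summable_norm_cancel)
    have r0: "rs \<longlonglongrightarrow> 0"
    proof (rule Lim_null_comparison)
      show "\<forall>\<^sub>F j in sequentially. norm (rs j) \<le> c * (1/2)^j"
        using bnd by (auto simp: power_one_over less_imp_le)
      show "(\<lambda>j. c * (1/2::real)^j) \<longlonglongrightarrow> 0"
        by (intro tendsto_mult_right_zero LIMSEQ_realpow_zero) auto
    qed
    have "(\<lambda>n. \<Sum>j<n. am j + bm j) \<longlonglongrightarrow> suminf am + suminf bm"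
      unfolding sum.distrib
      by (intro tendsto_add summable_LIMSEQ sa sb)
    moreover have "(\<lambda>n. \<Sum>j<n. am j + bm j) \<longlonglongrightarrow> x"
    proof -
      have "(\<lambda>n. x - rs n) \<longlonglongrightarrow> x - 0" by (intro tendsto_diff tendsto_const r0)
      moreover have "(\<lambda>n. x - rs n) = (\<lambda>n. \<Sum>j<n. am j + bm j)" using tel by (auto simp: algebra_simps)
      ultimately show ?thesis by simp
    qed
    ultimately have xe: "x = suminf am + suminf bm" using LIMSEQ_unique by blast
    have "suminf am \<in> A"
      by (rule closed_sequentially[OF cA _ summable_LIMSEQ[OF sa]]) (use amA sA in \<open>auto intro: subspace_sum\<close>)
    moreover have "suminf bm \<in> B"
      by (rule closed_sequentially[OF cB _ summable_LIMSEQ[OF sb]]) (use bmB sB in \<open>auto intro: subspace_sum\<close>)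
    moreover have "norm (suminf am) \<le> 2"
    proof -
      have "norm (suminf am) \<le> (\<Sum>j. norm (am j))" using sna by (rule summable_norm)
      also have "\<dots> \<le> (\<Sum>j. (1/2::real)^j)"
        by (rule suminf_le[OF _ sna geo]) (use nam in \<open>auto simp: power_one_over less_imp_le\<close>)
      also have "\<dots> = 2" by (simp add: suminf_geometric)
      finally show ?thesis .
    qed
    ultimately show ?thesis using xe by blast
  qed
  show ?thesis
  proof (intro exI[of _ "4 / c"] ballI)
    fix a b assume a: "a \<in> A" and b: "b \<in> B"
    show "norm a \<le> 4 / c * norm (a + b)"
    proof (cases "a + b = 0")
      case True
      then have "a = - b" by (simp add: eq_neg_iff_add_eq_0)
      then have "a \<in> B" using b sB by (simp add: subspace_neg)
      then have "a = 0" using a comp unfolding complementary_def by auto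
      then show ?thesis using True by simp
    next
      case False
      define s where "s = norm (a + b)"
      have s0: "s > 0" using False by (simp add: s_def)
      define t where "t = c / (2 * s)"
      have t0: "t > 0" using s0 c0 by (simp add: t_def)
      have "norm (t *\<^sub>R (a + b)) = c / 2" using s0 t0 c0 by (simp add: t_def s_def)
      then have "norm (t *\<^sub>R (a + b)) < c" using c0 by simp
      then obtain a' b' where ab': "a' \<in> A" "b' \<in> B" "t *\<^sub>R (a + b) = a' + b'" "norm a' \<le> 2"
        using step2 by metis
      have "t *\<^sub>R a \<in> A" "t *\<^sub>R b \<in> B" using a b sA sB by (auto simp: subspace_scale)
      moreover have "t *\<^sub>R a + t *\<^sub>R b = a' + b'" using ab' by (simp add: scaleR_right_distrib)
      ultimately have "t *\<^sub>R a = a'" using compl_unique[OF sA sB comp] ab' by blast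
      then have "t * norm a \<le> 2" using ab' t0 by auto
      then have "norm a \<le> 2 / t" using t0 by (simp add: field_simps)
      also have "2 / t = 4 / c * norm (a + b)" using s0 c0 by (simp add: t_def s_def field_simps)
      finally show ?thesis .
    qed
  qed
qed


lemma scaleC_add: "linear J \<Longrightarrow> scaleC J c (x + y) = scaleC J c x + scaleC J c y"
  by (simp add: scaleC_def linear_add scaleR_add_right)

lemma scaleC_diff: "linear J \<Longrightarrow> scaleC J c (x - y) = scaleC J c x - scaleC J c y"
  by (simp add: scaleC_def linear_diff scaleR_diff_right)

lemma scaleC_real: "scaleC J (complex_of_real r) x = r *\<^sub>R x"
  by (simp add: scaleC_def)

lemma csub_sub: "csubspace J S \<Longrightarrow> subspace S"
proof -
  assume h: "csubspace J S"
  have "c *\<^sub>R x \<in> S" if "x \<in> S" for c x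
  proof -
    have "scaleC J (complex_of_real c) x \<in> S" using h that unfolding csubspace_def by blast
    then show ?thesis by (simp add: scaleC_real)
  qed
  moreover have "0 \<in> S" "\<forall>x\<in>S. \<forall>y\<in>S. x + y \<in> S" using h unfolding csubspace_def by auto
  ultimately show "subspace S" unfolding subspace_def by blast
qed

lemma compl_sym: "complementary A B \<Longrightarrow> complementary B A"
proof -
  assume h: "complementary A B"
  have "x \<in> {b + a | b a. b \<in> B \<and> a \<in> A}" for x
  proof -
    obtain a b where "a \<in> A" "b \<in> B" "x = a + b" using h unfolding complementary_def by blast
    then have "x = b + a \<and> b \<in> B \<and> a \<in> A" by (simp add: add.commute)
    then show ?thesis by blast
  qed
  then have "{b + a | b a. b \<in> B \<and> a \<in> A} = UNIV" by blast
  moreover have "B \<inter> A = {0}" using h unfolding complementary_def by (simp add: Int_commute)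
  ultimately show ?thesis unfolding complementary_def by simp
qed

lemma iso_proj:
  fixes J :: "'a::banach \<Rightarrow> 'a" and A B K :: "'a set"
  assumes cbs: "complex_banach_structure J"
    and cA: "closed A" and cB: "closed B" and cK: "closed K"
    and csA: "csubspace J A" and csB: "csubspace J B" and csK: "csubspace J K"
    and AB: "complementary A B" and BK: "complementary B K"
  shows "cisomorphic J K A"
proof -
  have lin: "linear J" using cbs by (simp add: complex_banach_structure_def)
  have sA: "subspace A" and sB: "subspace B" and sK: "subspace K" using csA csB csK by (auto intro: csub_sub)
  have KB: "complementary K B" using BK by (rule compl_sym)
  define p where "p k = (THE a. a \<in> A \<and> k - a \<in> B)" for k
  have pchar: "p k = a" if "a \<in> A" "k - a \<in> B" for k a
  proof -
    have uniq: "a' = a" if "a' \<in> A" "k - a' \<in> B" for a'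
      using compl_unique[OF sA sB AB \<open>a' \<in> A\<close> \<open>a \<in> A\<close> \<open>k - a' \<in> B\<close> \<open>k - a \<in> B\<close>] by simp
    show ?thesis unfolding p_def
    proof (rule the_equality)
      show "a \<in> A \<and> k - a \<in> B" using that by simp
      fix x assume "x \<in> A \<and> k - x \<in> B"
      then show "x = a" using uniq by blast
    qed
  qed
  have pA: "p k \<in> A" and pB: "k - p k \<in> B" for k
  proof -
    obtain a b where "a \<in> A" "b \<in> B" "k = a + b" using AB unfolding complementary_def by blast
    then have "a \<in> A" "k - a \<in> B" by auto
    then have "p k = a" by (rule pchar)
    with \<open>a \<in> A\<close> \<open>k - a \<in> B\<close> show "p k \<in> A" "k - p k \<in> B" by auto
  qed
  obtain C1 where C1: "\<And>a b. a \<in> A \<Longrightarrow> b \<in> B \<Longrightarrow> norm a \<le> C1 * norm (a + b)"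
    using key[OF sA sB cA cB AB] by blast
  obtain C2 where C2: "\<And>a b. a \<in> K \<Longrightarrow> b \<in> B \<Longrightarrow> norm a \<le> C2 * norm (a + b)"
    using key[OF sK sB cK cB KB] by blast
  have inj: "inj_on p K"
  proof (rule inj_onI)
    fix x y assume x: "x \<in> K" and y: "y \<in> K" and e: "p x = p y"
    have "x - y = (x - p x) - (y - p y)" using e by simp
    moreover have "(x - p x) - (y - p y) \<in> B" using pB sB by (simp add: subspace_diff)
    ultimately have "x - y \<in> B" by simp
    moreover have "x - y \<in> K" using x y sK by (simp add: subspace_diff)
    ultimately have "x - y \<in> B \<inter> K" by simp
    then have "x - y = 0" using BK unfolding complementary_def by blast
    then show "x = y" by simp
  qed
  have img: "p ` K = A"
  proof
    show "p ` K \<subseteq> A" using pA by auto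
    show "A \<subseteq> p ` K"
    proof
      fix a assume a: "a \<in> A"
      obtain b k where bk: "b \<in> B" "k \<in> K" "a = b + k" using BK unfolding complementary_def by blast
      then have "k - a \<in> B" using sB by (simp add: subspace_neg)
      then have "p k = a" using a by (intro pchar)
      then show "a \<in> p ` K" using bk by blast
    qed
  qed
  have bij: "bij_betw p K A" using inj img by (simp add: bij_betw_def)
  have add: "\<forall>x\<in>K. \<forall>y\<in>K. p (x + y) = p x + p y"
  proof (intro ballI)
    fix x y assume "x \<in> K" "y \<in> K"
    have pa: "p x + p y \<in> A" using pA sA by (simp add: subspace_add)
    have eq: "(x + y) - (p x + p y) = (x - p x) + (y - p y)" by simp
    have pb: "(x + y) - (p x + p y) \<in> B" by (subst eq) (rule subspace_add[OF sB pB pB])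
    from pa pb show "p (x + y) = p x + p y" by (rule pchar)
  qed
  have hom: "\<forall>c. \<forall>x\<in>K. p (scaleC J c x) = scaleC J c (p x)"
  proof (intro allI ballI)
    fix c x assume "x \<in> K"
    have "scaleC J c (p x) \<in> A" using pA csA unfolding csubspace_def by blast
    moreover have "scaleC J c x - scaleC J c (p x) = scaleC J c (x - p x)" using lin by (simp add: scaleC_diff)
    then have "scaleC J c x - scaleC J c (p x) \<in> B" using pB csB unfolding csubspace_def by metis
    ultimately show "p (scaleC J c x) = scaleC J c (p x)" by (rule pchar)
  qed
  have bd1: "\<forall>x\<in>K. norm (p x) \<le> C1 * norm x"
  proof
    fix x assume "x \<in> K"
    show "norm (p x) \<le> C1 * norm x" using C1[OF pA pB[of x], of x] by simp
  qed
  have bd2: "\<forall>x\<in>K. norm x \<le> C2 * norm (p x)"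
  proof
    fix x assume x: "x \<in> K"
    have "- (x - p x) \<in> B" by (rule subspace_neg[OF sB pB])
    then have "p x - x \<in> B" by simp
    show "norm x \<le> C2 * norm (p x)" using C2[OF x \<open>p x - x \<in> B\<close>] by simp
  qed
  show ?thesis unfolding cisomorphic_def
    by (intro exI[of _ p] exI[of _ C1] exI[of _ C2] conjI bij add hom bd1 bd2)
qed


lemma graph_compl:
  fixes J :: "'a::banach \<Rightarrow> 'a" and M N :: "'a set"
  assumes cbs: "complex_banach_structure J"
    and nt: "(UNIV :: 'a set) \<noteq> {0}"
    and cM: "closed M" and csM: "csubspace J M" and cN: "closed N" and csN: "csubspace J N"
    and MN: "complementary M N" and iso: "cisomorphic J M N"
  shows "\<exists>K. closed K \<and> csubspace J K \<and> K \<noteq> M \<and> K \<noteq> N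
                \<and> complementary M K \<and> complementary N K"
proof -
  have lin: "linear J" using cbs by (simp add: complex_banach_structure_def)
  have sM: "subspace M" and sN: "subspace N" using csM csN by (auto intro: csub_sub)
  from iso obtain T where bij: "bij_betw T M N" and Tadd': "\<forall>x\<in>M. \<forall>y\<in>M. T (x + y) = T x + T y"
    and Thom': "\<forall>c. \<forall>x\<in>M. T (scaleC J c x) = scaleC J c (T x)"
    and TC': "\<exists>C. \<forall>x\<in>M. norm (T x) \<le> C * norm x"
    unfolding cisomorphic_def by blast
  from TC' obtain C where TC: "\<And>x. x \<in> M \<Longrightarrow> norm (T x) \<le> C * norm x" by blast
  have Tadd: "\<And>x y. x \<in> M \<Longrightarrow> y \<in> M \<Longrightarrow> T (x + y) = T x + T y" using Tadd' by blast
  have Thom: "\<And>c x. x \<in> M \<Longrightarrow> T (scaleC J c x) = scaleC J c (T x)" using Thom' by blast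
  have M0: "0 \<in> M" using sM by (rule subspace_0)
  have T0: "T 0 = 0" using Tadd[OF M0 M0] by simp
  have TN: "T m \<in> N" if "m \<in> M" for m using bij that by (auto simp: bij_betw_def)
  have Timg: "T ` M = N" using bij by (simp add: bij_betw_def)
  have Tinj: "inj_on T M" using bij by (simp add: bij_betw_def)
  have Tdiff: "T (a - b) = T a - T b" if "a \<in> M" "b \<in> M" for a b
  proof -
    have "a - b \<in> M" using that sM by (simp add: subspace_diff)
    then have "T ((a - b) + b) = T (a - b) + T b" using that Tadd by blast
    then show ?thesis by simp
  qed
  have Tz: "m = 0" if "m \<in> M" "T m = 0" for m
  proof -
    have "T m = T 0" using that T0 by simp
    then show ?thesis using inj_onD[OF Tinj _ that(1) M0] by blast
  qed
  have MN0: "z = 0" if "z \<in> M" "z \<in> N" for z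
    using MN that unfolding complementary_def by blast
  obtain C0 where C0: "\<And>a b. a \<in> M \<Longrightarrow> b \<in> N \<Longrightarrow> norm a \<le> C0 * norm (a + b)"
    using key[OF sM sN cM cN MN] by blast
  define K where "K = (\<lambda>m. m + T m) ` M"
  have closedK: "closed K"
    unfolding closed_sequential_limits
  proof (intro allI impI, elim conjE)
    fix k and x assume kK: "\<forall>n. k n \<in> K" and kx: "k \<longlonglongrightarrow> x"
    have "\<forall>j. \<exists>m. m \<in> M \<and> k j = m + T m" using kK unfolding K_def by blast
    from choice[OF this] obtain f where f: "\<And>j. f j \<in> M" "\<And>j. k j = f j + T (f j)" by blast
    obtain a b where ab: "a \<in> M" "b \<in> N" "x = a + b" using MN unfolding complementary_def by blast
    have kx0: "(\<lambda>j. k j - x) \<longlonglongrightarrow> 0" using kx by (rule LIM_zero)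
    have fa0: "(\<lambda>j. f j - a) \<longlonglongrightarrow> 0"
    proof (rule Lim_null_comparison)
      show "\<forall>\<^sub>F j in sequentially. norm (f j - a) \<le> C0 * norm (k j - x)"
      proof (intro always_eventually allI)
        fix j
        have "f j - a \<in> M" using f ab sM by (simp add: subspace_diff)
        moreover have "T (f j) - b \<in> N" using TN[OF f(1)] ab sN by (simp add: subspace_diff)
        moreover have "(f j - a) + (T (f j) - b) = k j - x" using f ab by simp
        ultimately show "norm (f j - a) \<le> C0 * norm (k j - x)" using C0 by metis
      qed
      show "(\<lambda>j. C0 * norm (k j - x)) \<longlonglongrightarrow> 0"
        by (intro tendsto_mult_right_zero tendsto_norm_zero kx0)
    qed
    have fa: "f \<longlonglongrightarrow> a" using fa0 by (rule LIM_zero_cancel)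
    have "(\<lambda>j. T (f j) - T a) \<longlonglongrightarrow> 0"
    proof (rule Lim_null_comparison)
      show "\<forall>\<^sub>F j in sequentially. norm (T (f j) - T a) \<le> C * norm (f j - a)"
      proof (intro always_eventually allI)
        fix j
        have "f j - a \<in> M" using f ab sM by (simp add: subspace_diff)
        then have "norm (T (f j - a)) \<le> C * norm (f j - a)" by (rule TC)
        then show "norm (T (f j) - T a) \<le> C * norm (f j - a)" using Tdiff[OF f(1) ab(1)] by simp
      qed
      show "(\<lambda>j. C * norm (f j - a)) \<longlonglongrightarrow> 0"
        by (intro tendsto_mult_right_zero tendsto_norm_zero fa0)
    qed
    then have Tfa: "(\<lambda>j. T (f j)) \<longlonglongrightarrow> T a" by (rule LIM_zero_cancel)
    have "(\<lambda>j. k j - f j) \<longlonglongrightarrow> x - a" by (intro tendsto_diff kx fa)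
    moreover have "(\<lambda>j. k j - f j) = (\<lambda>j. T (f j))" using f by (auto simp: fun_eq_iff)
    ultimately have "(\<lambda>j. T (f j)) \<longlonglongrightarrow> x - a" by simp
    then have "T a = x - a" using Tfa LIMSEQ_unique by blast
    then have "x = a + T a" by simp
    then show "x \<in> K" unfolding K_def using ab by blast
  qed
  have csK: "csubspace J K"
    unfolding csubspace_def
  proof (intro conjI ballI allI)
    show "0 \<in> K" unfolding K_def using M0 T0 by force
  next
    fix x y assume "x \<in> K" "y \<in> K"
    then obtain m1 m2 where m: "m1 \<in> M" "m2 \<in> M" "x = m1 + T m1" "y = m2 + T m2" unfolding K_def by blast
    have "m1 + m2 \<in> M" using m sM by (simp add: subspace_add)
    moreover have "x + y = (m1 + m2) + T (m1 + m2)" using m Tadd by (simp add: algebra_simps)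
    ultimately show "x + y \<in> K" unfolding K_def by blast
  next
    fix c x assume "x \<in> K"
    then obtain m where m: "m \<in> M" "x = m + T m" unfolding K_def by blast
    have "scaleC J c m \<in> M" using m csM unfolding csubspace_def by blast
    moreover have "scaleC J c x = scaleC J c m + T (scaleC J c m)" using m Thom lin by (simp add: scaleC_add)
    ultimately show "scaleC J c x \<in> K" unfolding K_def by blast
  qed
  obtain m0 where m0: "m0 \<in> M" "m0 \<noteq> 0"
  proof (rule ccontr)
    assume "\<not> thesis"
    then have Mz: "\<And>m. m \<in> M \<Longrightarrow> m = 0" using that by blast
    have "x = 0" for x :: 'a
    proof -
      obtain a b where ab: "a \<in> M" "b \<in> N" "x = a + b" using MN unfolding complementary_def by blast
      obtain a' where "a' \<in> M" "b = T a'" using ab(2) Timg by blast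
      moreover have "a = 0" "a' = 0" using ab(1) \<open>a' \<in> M\<close> Mz by auto
      ultimately show ?thesis using ab T0 by simp
    qed
    then show False using nt by blast
  qed
  have KM: "K \<noteq> M"
  proof
    assume "K = M"
    then have "m0 + T m0 \<in> M" unfolding K_def using m0 by blast
    then have "(m0 + T m0) - m0 \<in> M" by (rule subspace_diff[OF sM _ m0(1)])
    then have "T m0 = 0" using MN0 TN[OF m0(1)] by simp
    then show False using Tz m0 by blast
  qed
  have KN: "K \<noteq> N"
  proof
    assume "K = N"
    then have "m0 + T m0 \<in> N" unfolding K_def using m0 by blast
    then have "(m0 + T m0) - T m0 \<in> N" by (rule subspace_diff[OF sN _ TN[OF m0(1)]])
    then have "m0 = 0" using MN0 m0 by simp
    then show False using m0 by blast
  qed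
  have cMK: "complementary M K"
    unfolding complementary_def
  proof (intro conjI)
    show "M \<inter> K = {0}"
    proof
      show "{0} \<subseteq> M \<inter> K" using M0 T0 unfolding K_def by force
      show "M \<inter> K \<subseteq> {0}"
      proof
        fix z assume "z \<in> M \<inter> K"
        then obtain m where m: "m \<in> M" "z = m + T m" "z \<in> M" unfolding K_def by blast
        have "z - m \<in> M" by (rule subspace_diff[OF sM m(3) m(1)])
        then have "T m \<in> M" using m(2) by simp
        then have "T m = 0" using MN0 TN[OF m(1)] by simp
        then show "z \<in> {0}" using Tz m T0 by simp
      qed
    qed
    show "{m + n |m n. m \<in> M \<and> n \<in> K} = UNIV"
    proof -
      have "x \<in> {m + n |m n. m \<in> M \<and> n \<in> K}" for x
      proof -
        obtain a b where ab: "a \<in> M" "b \<in> N" "x = a + b" using MN unfolding complementary_def by blast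
        obtain m' where m': "m' \<in> M" "b = T m'" using ab(2) Timg by blast
        have "a - m' \<in> M" using ab m' sM by (simp add: subspace_diff)
        moreover have "m' + T m' \<in> K" unfolding K_def using m' by blast
        moreover have "x = (a - m') + (m' + T m')" using ab m' by simp
        ultimately show ?thesis by blast
      qed
      then show ?thesis by blast
    qed
  qed
  have cNK: "complementary N K"
    unfolding complementary_def
  proof (intro conjI)
    show "N \<inter> K = {0}"
    proof
      show "{0} \<subseteq> N \<inter> K" using M0 T0 subspace_0[OF sN] unfolding K_def by force
      show "N \<inter> K \<subseteq> {0}"
      proof
        fix z assume "z \<in> N \<inter> K"
        then obtain m where m: "m \<in> M" "z = m + T m" "z \<in> N" unfolding K_def by blast
        have "z - T m \<in> N" by (rule subspace_diff[OF sN m(3) TN[OF m(1)]])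
        then have "m \<in> N" using m(2) by simp
        then have "m = 0" using MN0 m by simp
        then show "z \<in> {0}" using m T0 by simp
      qed
    qed
    show "{m + n |m n. m \<in> N \<and> n \<in> K} = UNIV"
    proof -
      have "x \<in> {m + n |m n. m \<in> N \<and> n \<in> K}" for x
      proof -
        obtain a b where ab: "a \<in> M" "b \<in> N" "x = a + b" using MN unfolding complementary_def by blast
        have "b - T a \<in> N" using ab TN[OF ab(1)] sN by (simp add: subspace_diff)
        moreover have "a + T a \<in> K" unfolding K_def using ab by blast
        moreover have "x = (b - T a) + (a + T a)" using ab by simp
        ultimately show ?thesis by blast
      qed
      then show ?thesis by blast
    qed
  qed
  show ?thesis using closedK csK KM KN cMK cNK by blast
qed

theorem proposition5p1:
  fixes J :: "'a::banach \<Rightarrow> 'a" and M N :: "'a set"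
  assumes "complex_banach_structure J"
    and "(UNIV :: 'a set) \<noteq> {0}"
    and "closed M" "csubspace J M" "closed N" "csubspace J N"
    and "complementary M N"
  shows "(cisomorphic J M N \<longleftrightarrow>
           (\<exists>K. closed K \<and> csubspace J K \<and> K \<noteq> M \<and> K \<noteq> N
                \<and> complementary M K \<and> complementary N K))
       \<and> (\<forall>K. closed K \<and> csubspace J K \<and> K \<noteq> M \<and> K \<noteq> N
                \<and> complementary M K \<and> complementary N K
             \<longrightarrow> cisomorphic J K M \<and> cisomorphic J K N)"
proof (intro conjI iffI allI impI)
  assume "cisomorphic J M N"
  then show "\<exists>K. closed K \<and> csubspace J K \<and> K \<noteq> M \<and> K \<noteq> N
                \<and> complementary M K \<and> complementary N K"
    by (rule graph_compl[OF assms(1,2,3,4,5,6,7)])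
next
  assume "\<exists>K. closed K \<and> csubspace J K \<and> K \<noteq> M \<and> K \<noteq> N
                \<and> complementary M K \<and> complementary N K"
  then obtain K where K: "closed K" "csubspace J K" "complementary M K" "complementary N K" by blast
  show "cisomorphic J M N"
    by (rule iso_proj[OF assms(1) assms(5) K(1) assms(3) assms(6) K(2) assms(4) K(4) compl_sym[OF K(3)]])
next
  fix K assume K: "closed K \<and> csubspace J K \<and> K \<noteq> M \<and> K \<noteq> N \<and> complementary M K \<and> complementary N K"
  show "cisomorphic J K M"
    using K by (intro iso_proj[OF assms(1) assms(3) assms(5) _ assms(4) assms(6) _ assms(7)]) auto
  show "cisomorphic J K N"
    using K by (intro iso_proj[OF assms(1) assms(5) assms(3) _ assms(6) assms(4) _ compl_sym[OF assms(7)]]) auto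
qed

end
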